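(* Let $D\subseteq\{0,1,\dots,n\}$ and let $f:\mathbb{F}_2^n\to\mathbb{F}_2^n$ be a $D$-neighbor balanced bijection. Then the labeling $x\mapsto \zeta(f(x))+1$ is a $D$-magic labeling of $Q_n$.
   Context: $Q_n$ is the hypercube with vertex set $\mathbb{F}_2^n$, two vertices adjacent iff they differ in exactly one coordinate; $G_i(\boldsymbol{u})$ is the set of vertices at (Hamming) distance $i$ from $\boldsymbol{u}$ and $N_D(\boldsymbol{u})=\bigcup_{i\in D}G_i(\boldsymbol{u})$. For $\boldsymbol{a}=(a_0,\dots,a_{n-1})\in\mathbb{F}_2^n$, $\zeta(\boldsymbol{a})=\sum_{i=0}^{n-1}a_i2^i$ with $a_i\in\{0,1\}$ regarded as integers. A subset $A\subseteq\mathbb{F}_2^n$ is balanced if for every coordinate $i$, the number of $\boldsymbol{a}\in A$ with $a_i=1$ equals $|A|/2$. A bijection $f:\mathbb{F}_2^n\to\mathbb{F}_2^n$ is $D$-neighbor balanced if $f(N_D(\boldsymbol{u}))$ is balanced for every $\boldsymbol{u}\in\mathbb{F}_2^n$. A $D$-magic labeling of $Q_n$ is a bijection $g:\mathbb{F}_2^n\to\{1,\dots,2^n\}$ such that $\sum_{y\in N_D(\boldsymbol{u})}g(y)$ is the same for all $\boldsymbol{u}$. *)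

theory Defs
  imports Main
begin

text \<open>Vertices of Q_n: elements of F_2^n, represented as boolean lists of length n
  (True = 1, False = 0); coordinate i is xs ! i.\<close>

definition cube :: "nat \<Rightarrow> bool list set" where
  "cube n = {a. length a = n}"

definition hdist :: "bool list \<Rightarrow> bool list \<Rightarrow> nat" where
  "hdist a b = card {i. i < length a \<and> a ! i \<noteq> b ! i}"

definition sphere :: "nat \<Rightarrow> bool list \<Rightarrow> nat \<Rightarrow> bool list set" where
  "sphere n u i = {y \<in> cube n. hdist u y = i}"

definition nbhd :: "nat \<Rightarrow> nat set \<Rightarrow> bool list \<Rightarrow> bool list set" where
  "nbhd n D u = (\<Union>i\<in>D. sphere n u i)"

definition zeta :: "bool list \<Rightarrow> nat" where
  "zeta a = (\<Sum>i<length a. (if a ! i then 1 else 0) * 2 ^ i)"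

definition balanced :: "nat \<Rightarrow> bool list set \<Rightarrow> bool" where
  "balanced n A \<longleftrightarrow> (\<forall>i<n. 2 * card {a \<in> A. a ! i} = card A)"

definition neighbor_balanced :: "nat \<Rightarrow> nat set \<Rightarrow> (bool list \<Rightarrow> bool list) \<Rightarrow> bool" where
  "neighbor_balanced n D f \<longleftrightarrow>
     bij_betw f (cube n) (cube n) \<and> (\<forall>u\<in>cube n. balanced n (f ` nbhd n D u))"

definition magic_labeling :: "nat \<Rightarrow> nat set \<Rightarrow> (bool list \<Rightarrow> nat) \<Rightarrow> bool" where
  "magic_labeling n D g \<longleftrightarrow>
     bij_betw g (cube n) {1..2^n} \<and>
     (\<exists>c. \<forall>u\<in>cube n. (\<Sum>y\<in>nbhd n D u. g y) = c)"

end

theory Submission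
  imports Defs
begin

lemma zeta_Nil[simp]: "zeta [] = 0" by (simp add: zeta_def)

lemma zeta_Cons[simp]: "zeta (b#a) = (if b then 1 else 0) + 2 * zeta a"
proof -
  have "zeta (b#a) = (\<Sum>i<Suc (length a). (if (b#a) ! i then 1 else 0) * 2 ^ i)"
    by (simp add: zeta_def)
  also have "\<dots> = (if b then 1 else 0) + (\<Sum>i<length a. (if a ! i then 1 else 0) * 2 ^ Suc i)"
    by (subst sum.lessThan_Suc_shift) simp
  also have "\<dots> = (if b then 1 else 0) + 2 * zeta a"
    by (simp add: zeta_def sum_distrib_left mult.left_commute)
  finally show ?thesis .
qed

lemma zeta_lt: "zeta a < 2 ^ length a"
  by (induction a) auto

lemma zeta_inj: "length a = length b \<Longrightarrow> zeta a = zeta b \<Longrightarrow> a = b"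
proof (induction a arbitrary: b)
  case Nil then show ?case by simp
next
  case (Cons x a)
  then obtain y b' where b: "b = y # b'" by (cases b) auto
  with Cons.prems have "(if x then 1 else 0) + 2 * zeta a = (if y then 1 else (0::nat)) + 2 * zeta b'" by simp
  then have "x = y" and "zeta a = zeta b'" by (auto split: if_splits) presburger+
  with Cons b show ?case by auto
qed

lemma card_cube: "card (cube n) = 2 ^ n"
proof -
  have "card {xs. set xs \<subseteq> (UNIV::bool set) \<and> length xs = n} = 2^n"
    by (subst card_lists_length_eq) auto
  then show ?thesis by (simp add: cube_def)
qed

lemma finite_cube: "finite (cube n)"
proof -
  have "finite {xs. set xs \<subseteq> (UNIV::bool set) \<and> length xs = n}"
    by (rule finite_lists_length_eq) auto
  then show ?thesis by (simp add: cube_def)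
qed

lemma zeta_bij: "bij_betw zeta (cube n) {0..<2^n}"
proof -
  have inj: "inj_on zeta (cube n)" by (auto simp: inj_on_def cube_def intro: zeta_inj)
  have sub: "zeta ` cube n \<subseteq> {0..<2^n}" using zeta_lt by (auto simp: cube_def)
  have "card (zeta ` cube n) = card {0..<(2::nat)^n}" using card_image[OF inj] card_cube by simp
  then have "zeta ` cube n = {0..<2^n}" using sub by (intro card_subset_eq) auto
  with inj show ?thesis by (simp add: bij_betw_def)
qed

lemma zeta_sum:
  assumes "A \<subseteq> cube n" "finite A"
  shows "(\<Sum>a\<in>A. zeta a) = (\<Sum>i<n. 2^i * card {a\<in>A. a ! i})"
proof -
  have "(\<Sum>a\<in>A. zeta a) = (\<Sum>a\<in>A. \<Sum>i<n. (if a ! i then 1 else 0) * 2 ^ i)"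
    using assms(1) by (intro sum.cong) (auto simp: zeta_def cube_def)
  also have "\<dots> = (\<Sum>i<n. \<Sum>a\<in>A. (if a ! i then 1 else 0) * 2 ^ i)" by (rule sum.swap)
  also have "\<dots> = (\<Sum>i<n. 2^i * card {a\<in>A. a ! i})"
  proof (intro sum.cong refl)
    fix i
    have "(\<Sum>a\<in>A. (if a ! i then 1 else 0) * (2::nat) ^ i) = (\<Sum>a\<in>{a\<in>A. a ! i}. 2 ^ i)"
    proof -
      have "(\<Sum>a\<in>A. (if a ! i then 1 else 0) * (2::nat) ^ i) = (\<Sum>a\<in>A. if a ! i then 2 ^ i else 0)"
        by (intro sum.cong) auto
      also have "\<dots> = (\<Sum>a\<in>{a\<in>A. a ! i}. 2 ^ i)" using assms(2) by (rule sum.inter_filter[symmetric])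
      finally show ?thesis .
    qed
    then show "(\<Sum>a\<in>A. (if a ! i then 1 else 0) * (2::nat) ^ i) = 2^i * card {a\<in>A. a ! i}" by simp
  qed
  finally show ?thesis .
qed

lemma geom: "(\<Sum>i<n. (2::nat)^i) + 1 = 2^n"
proof (induction n)
  case (Suc n)
  have "(\<Sum>i<Suc n. (2::nat)^i) + 1 = ((\<Sum>i<n. (2::nat)^i) + 1) + 2^n" by simp
  also have "\<dots> = 2 ^ Suc n" using Suc by simp
  finally show ?case .
qed simp

definition xorl :: "bool list \<Rightarrow> bool list \<Rightarrow> bool list" where
  "xorl a b = map2 (\<noteq>) a b"

lemma nbhd_sub_cube: "nbhd n D u \<subseteq> cube n"
  by (auto simp: nbhd_def sphere_def)

lemma trans_into:
  assumes u: "u \<in> cube n" and v: "v \<in> cube n"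
  shows "xorl (xorl u v) ` nbhd n D u \<subseteq> nbhd n D v"
proof
  fix z assume "z \<in> xorl (xorl u v) ` nbhd n D u"
  then obtain y where y: "y \<in> nbhd n D u" and z: "z = xorl (xorl u v) y" by auto
  then obtain i where i: "i \<in> D" "y \<in> cube n" "hdist u y = i" by (auto simp: nbhd_def sphere_def)
  have lz: "length z = n" using u v i(2) z by (simp add: xorl_def cube_def)
  have "{j. j < length v \<and> v ! j \<noteq> z ! j} = {j. j < length u \<and> u ! j \<noteq> y ! j}"
    using u v i(2) z by (auto simp: xorl_def cube_def)
  then have "hdist v z = i" using i by (simp add: hdist_def)
  then show "z \<in> nbhd n D v" using i lz by (auto simp: nbhd_def sphere_def cube_def)
qed

lemma card_nbhd:
  assumes u: "u \<in> cube n" and v: "v \<in> cube n"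
  shows "card (nbhd n D u) = card (nbhd n D v)"
proof -
  let ?t = "xorl (xorl u v)"
  have sym: "xorl v u = xorl u v" using u v by (auto simp: xorl_def cube_def intro: nth_equalityI)
  have inv: "?t (?t y) = y" if "y \<in> cube n" for y
    using u v that by (auto simp: xorl_def cube_def intro: nth_equalityI)
  have "bij_betw ?t (nbhd n D u) (nbhd n D v)"
    apply (rule bij_betw_byWitness[where f'="?t"])
    using inv nbhd_sub_cube[of n D u] nbhd_sub_cube[of n D v] trans_into[OF u v] trans_into[OF v u, of D] sym
    by (auto simp del: nbhd_sub_cube)
  then show ?thesis by (rule bij_betw_same_card)
qed

theorem lemma3p5:
  fixes n :: nat and D :: "nat set" and f :: "bool list \<Rightarrow> bool list"
  assumes "D \<subseteq> {0..n}"
    and "neighbor_balanced n D f"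
  shows "magic_labeling n D (\<lambda>x. zeta (f x) + 1)"
proof -
  have bf: "bij_betw f (cube n) (cube n)" and bal: "\<And>u. u \<in> cube n \<Longrightarrow> balanced n (f ` nbhd n D u)"
    using assms(2) by (auto simp: neighbor_balanced_def)
  have b1: "bij_betw (\<lambda>x. zeta (f x)) (cube n) {0..<2^n}"
    using bij_betw_trans[OF bf zeta_bij] by (simp add: comp_def)
  have b2: "bij_betw (\<lambda>k::nat. k + 1) {0..<2^n} {1..2^n}"
    by (rule bij_betw_byWitness[where f'="\<lambda>k. k - 1"]) auto
  have bij: "bij_betw (\<lambda>x. zeta (f x) + 1) (cube n) {1..2^n}"
    using bij_betw_trans[OF b1 b2] by (simp add: comp_def)
  define u0 where "u0 = replicate n False"
  have u0: "u0 \<in> cube n" by (simp add: u0_def cube_def)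
  have key: "2 * (\<Sum>y\<in>nbhd n D u. zeta (f y) + 1) = card (nbhd n D u0) * (2^n + 1)"
    if u: "u \<in> cube n" for u
  proof -
    let ?N = "nbhd n D u"
    let ?A = "f ` ?N"
    have finN: "finite ?N" using finite_subset[OF nbhd_sub_cube finite_cube] .
    have injN: "inj_on f ?N" using bf nbhd_sub_cube inj_on_subset by (metis bij_betw_def)
    have Asub: "?A \<subseteq> cube n" using bf nbhd_sub_cube[of n D u] by (auto simp: bij_betw_def)
    have cA: "card ?A = card ?N" using card_image[OF injN] .
    have "(\<Sum>y\<in>?N. zeta (f y)) = (\<Sum>a\<in>?A. zeta a)" using sum.reindex[OF injN, of zeta] by simp
    also have "\<dots> = (\<Sum>i<n. 2^i * card {a\<in>?A. a ! i})" using zeta_sum[OF Asub] finN by simp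
    finally have s: "(\<Sum>y\<in>?N. zeta (f y)) = (\<Sum>i<n. 2^i * card {a\<in>?A. a ! i})" .
    have "2 * (\<Sum>i<n. 2^i * card {a\<in>?A. a ! i}) = (\<Sum>i<n. 2^i * (2 * card {a\<in>?A. a ! i}))"
      by (simp add: sum_distrib_left mult.left_commute)
    also have "\<dots> = (\<Sum>i<n. 2^i * card ?N)"
      using bal[OF u] cA by (intro sum.cong) (auto simp: balanced_def)
    also have "\<dots> = card ?N * (\<Sum>i<n. 2^i)" by (simp add: sum_distrib_left mult.commute)
    finally have "2 * (\<Sum>y\<in>?N. zeta (f y)) = card ?N * (\<Sum>i<n. 2^i)" using s by simp
    then have "2 * (\<Sum>y\<in>?N. zeta (f y) + 1) = card ?N * ((\<Sum>i<n. 2^i) + 1) + card ?N"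
    proof -
      have "(\<Sum>y\<in>?N. zeta (f y) + 1) = (\<Sum>y\<in>?N. zeta (f y)) + card ?N"
        unfolding sum.distrib by simp
      then show ?thesis using \<open>2 * (\<Sum>y\<in>?N. zeta (f y)) = card ?N * (\<Sum>i<n. 2^i)\<close>
        by (simp add: algebra_simps)
    qed
    also have "\<dots> = card ?N * (2^n + 1)" using geom[of n] by simp
    finally show ?thesis using card_nbhd[OF u u0] by simp
  qed
  have "\<forall>u\<in>cube n. (\<Sum>y\<in>nbhd n D u. zeta (f y) + 1) = card (nbhd n D u0) * (2^n + 1) div 2"
    using key by (metis nonzero_mult_div_cancel_left zero_neq_numeral)
  with bij show ?thesis unfolding magic_labeling_def by blast
qed

end
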